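(* Let $k\ge 2$ be an integer, $b(k)=\frac{k^k}{(k-1)^{k-1}}$, and \[ f_k(\beta)=\log_{b(k)}\!\left(\left(\frac{1-\beta}{k^2}+\beta\right)\left(\frac{\beta}{k^2}+1-\beta\right)^{k-1}\right)-\frac1k . \] Then $f_k(\beta)\le -1$ for all $\beta\in[0,1]$. *)

theory Defs
  imports Complex_Main
begin

definition bk :: "nat \<Rightarrow> real" where
  "bk k = real k ^ k / (real k - 1) ^ (k - 1)"

definition fk :: "nat \<Rightarrow> real \<Rightarrow> real" where
  "fk k \<beta> = log (bk k) (((1 - \<beta>) / (real k)^2 + \<beta>) * (\<beta> / (real k)^2 + 1 - \<beta>) ^ (k - 1)) - 1 / real k"

end

theory Submission
  imports Defs
begin

lemma bk_ge4:
  assumes "k \<ge> (2::nat)"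
  shows "bk k \<ge> 4"
proof -
  define x :: real where "x = 1 / (real k - 1)"
  have k1: "real k - 1 > 0" using assms by simp
  have "1 + real (k-1) * x \<le> (1 + x) ^ (k-1)"
    proof (rule Bernoulli_inequality)
    have "x > 0" using k1 by (simp add: x_def)
    thus "-1 \<le> x" by linarith
  qed
  moreover have "real (k-1) * x = 1" using k1 assms by (simp add: x_def of_nat_diff)
  moreover have "real (k-1) = real k - 1" using assms by (simp add: of_nat_diff)
  moreover have "1 + x = real k / (real k - 1)" using k1 by (simp add: x_def field_simps)
  ultimately have h: "2 \<le> (real k / (real k - 1)) ^ (k-1)" by simp
  have "bk k = real k * (real k / (real k - 1)) ^ (k-1)"
    unfolding bk_def using assms
    by (cases k) (auto simp: power_divide)
  also have "\<dots> \<ge> 2 * 2" using h assms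
    by (intro mult_mono) auto
  finally show ?thesis by simp
qed

theorem lemma4p9:
  fixes k :: nat and \<beta> :: real
  assumes "k \<ge> 2" and "0 \<le> \<beta>" and "\<beta> \<le> 1"
  shows "fk k \<beta> \<le> -1"
proof -
  define K where "K = real k"
  have K2: "K \<ge> 2" using assms by (simp add: K_def)
  define s where "s = 1 + 1 / K^2"
  define a where "a = (1 - \<beta>) / K^2 + \<beta>"
  define c where "c = \<beta> / K^2 + 1 - \<beta>"
  have Kp: "K^2 > 0" using K2 by simp
  have apos: "a > 0"
  proof (cases "\<beta> = 0")
    case True then show ?thesis using Kp by (simp add: a_def)
  next
    case False then show ?thesis using assms Kp unfolding a_def
      by (smt (verit) divide_nonneg_pos)
  qed
  have cpos: "c > 0"
  proof (cases "\<beta> = 1")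
    case True then show ?thesis using Kp by (simp add: c_def)
  next
    case False then show ?thesis using assms Kp unfolding c_def
      by (smt (verit) divide_nonneg_pos)
  qed
  have sum: "a + c = s" using Kp by (simp add: a_def c_def s_def add_divide_distrib[symmetric])
  have spos: "s > 0" using sum apos cpos by simp
  define m where "m = s / K"
  define m' where "m' = s * (K - 1) / K"
  have mpos: "m > 0" "m' > 0" using spos K2 by (auto simp: m_def m'_def)
  have l1: "ln (a / m) \<le> a / m - 1" using apos mpos by (intro ln_le_minus_one) auto
  have l2: "ln (c / m') \<le> c / m' - 1" using cpos mpos by (intro ln_le_minus_one) auto
  have km1: "real (k - 1) = K - 1" using assms by (simp add: K_def of_nat_diff)
  have eq: "a / m + (K - 1) * (c / m') = K"
    proof -
    have e1: "a / m = K * a / s" using K2 spos by (simp add: m_def)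
    have e2: "(K - 1) * (c / m') = K * c / s" using K2 spos by (simp add: m'_def)
    have "K * a / s + K * c / s = K * (a + c) / s" by (simp add: add_divide_distrib algebra_simps)
    thus ?thesis using e1 e2 sum spos by simp
  qed
  have "ln a + (K - 1) * ln c - (ln m + (K - 1) * ln m')
        = ln (a / m) + (K - 1) * ln (c / m')"
    using apos cpos mpos by (simp add: ln_div algebra_simps)
  also have "\<dots> \<le> (a / m - 1) + (K - 1) * (c / m' - 1)"
    using l1 l2 K2 by (intro add_mono mult_left_mono) auto
  also have "\<dots> = 0" using eq by (simp add: algebra_simps)
  finally have lnP1: "ln a + (K - 1) * ln c \<le> ln m + (K - 1) * ln m'" by simp
  have lnP: "ln (a * c ^ (k - 1)) = ln a + (K - 1) * ln c"
    using apos cpos km1 by (simp add: ln_mult ln_realpow)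
  have lnb: "ln (bk k) = K * ln K - (K - 1) * ln (K - 1)"
    unfolding bk_def using K2 km1 by (simp add: K_def ln_div ln_realpow)
  have lnm: "ln m + (K - 1) * ln m' = K * ln s - ln (bk k)"
  proof -
    have h1: "ln m = ln s - ln K" using K2 spos by (simp add: m_def ln_div)
    have h2: "ln m' = ln s + ln (K - 1) - ln K" using K2 spos
      by (simp add: m'_def ln_div ln_mult)
    show ?thesis unfolding lnb h1 h2 by (simp add: algebra_simps)
  qed
  have "ln s \<le> s - 1" using spos by (rule ln_le_minus_one)
  hence "K^2 * ln s \<le> 1" using Kp by (simp add: s_def field_simps)
  moreover have "ln (bk k) \<ge> 1"
  proof -
    have "exp 1 \<le> (4::real)" using exp_le by simp
    also have "\<dots> \<le> bk k" using bk_ge4 assms by simp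
    finally have "exp 1 \<le> bk k" .
    hence "ln (exp 1) \<le> ln (bk k)" using exp_gt_zero[of 1] by (subst ln_le_cancel_iff) linarith+
    thus ?thesis by simp
  qed
  ultimately have key: "K^2 * ln s \<le> ln (bk k)" by simp
  have bpos: "ln (bk k) > 0" using \<open>ln (bk k) \<ge> 1\<close> by simp
  have "ln (a * c ^ (k - 1)) \<le> K * ln s - ln (bk k)" using lnP lnP1 lnm by simp
  also have "\<dots> \<le> (1 / K - 1) * ln (bk k)"
  proof -
    have "K * ln s \<le> ln (bk k) / K" using key K2
      by (simp add: field_simps power2_eq_square)
    thus ?thesis by (simp add: algebra_simps)
  qed
  finally have "ln (a * c ^ (k - 1)) / ln (bk k) \<le> 1 / K - 1"
    using bpos by (simp add: divide_le_eq)
  moreover have "fk k \<beta> = ln (a * c ^ (k - 1)) / ln (bk k) - 1 / K"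
    unfolding fk_def log_def a_def c_def K_def by (simp only:)
  ultimately show ?thesis by simp
qed

end
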